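(* Let $P_Z$ be a distribution on a sample space $\mathcal{Z}$, let $S=(Z_1,\ldots,Z_n)$ consist of $n$ i.i.d. samples from $P_Z$, and let a hypothesis $W\in\mathcal{W}$ be produced by a conditional distribution (learning algorithm) $P_{W|S}$. Let $\ell:\mathcal{W}\times\mathcal{Z}\to\mathbb{R}$ be a loss function. Suppose that $(\mathcal{W},\rho)$ is a Polish metric space and that for every $z\in\mathcal{Z}$ the map $w\mapsto \ell(w,z)$ is $L$-Lipschitz under $\rho$. Then $$\big|\overline{\mathrm{gen}}(W,S)\big| \le \frac{L}{n}\sum_{i=1}^n \mathbb{E}\big[\mathbb{W}(P_{W|Z_i},P_W)\big].$$
   Context: The population risk is $\mathscr{L}_{P_Z}(w)=\mathbb{E}[\ell(w,Z)]$ with $Z\sim P_Z$; the empirical risk is $\mathscr{L}_s(w)=\frac1n\sum_{i=1}^n\ell(w,z_i)$; the generalization error is $\mathrm{gen}(w,s)=\mathscr{L}_{P_Z}(w)-\mathscr{L}_s(w)$ and $\overline{\mathrm{gen}}(W,S)=\mathbb{E}[\mathrm{gen}(W,S)]$ (expectation over the joint distribution of $(W,S)$). $P_W$ is the marginal distribution of $W$ and $P_{W|Z_i}$ the conditional distribution of $W$ given $Z_i$; the expectation in the bound is over $Z_i\sim P_Z$. A function $f$ is $L$-Lipschitz under $\rho$ if $|f(x)-f(y)|\le L\rho(x,y)$ for all $x,y$. $\mathbb{W}(P,Q)=\inf_{R\in\Pi(P,Q)}\int\rho(x,y)\,dR(x,y)$ is the Wasserstein distance of order 1 with respect to $\rho$,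 where $\Pi(P,Q)$ is the set of couplings of $P$ and $Q$. Polish spaces carry the Borel $\sigma$-algebra generated by $\rho$. *)

theory Defs
  imports "HOL-Probability.Probability"
begin

definition couplings :: "'w::metric_space measure \<Rightarrow> 'w measure \<Rightarrow> ('w \<times> 'w) measure set" where
  "couplings P Q = {R. sets R = sets (borel \<Otimes>\<^sub>M borel) \<and>
      distr R borel fst = P \<and> distr R borel snd = Q}"

definition wasserstein1 :: "'w::metric_space measure \<Rightarrow> 'w measure \<Rightarrow> ennreal" where
  "wasserstein1 P Q = (INF R \<in> couplings P Q. \<integral>\<^sup>+ xy. ennreal (dist (fst xy) (snd xy)) \<partial>R)"

text \<open>Joint distribution of (S, W): S drawn from Ms, W drawn from kernel K given S.\<close>
definition joint :: "'s measure \<Rightarrow> ('s \<Rightarrow> 'w measure) \<Rightarrow> 'w measure \<Rightarrow> ('s \<times> 'w) measure" where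
  "joint Ms K Mw = Ms \<bind> (\<lambda>s. distr (K s) (Ms \<Otimes>\<^sub>M Mw) (\<lambda>w. (s, w)))"

definition pop_risk :: "'z measure \<Rightarrow> ('w \<Rightarrow> 'z \<Rightarrow> real) \<Rightarrow> 'w \<Rightarrow> real" where
  "pop_risk PZ loss w = (\<integral> z. loss w z \<partial>PZ)"

definition emp_risk :: "nat \<Rightarrow> ('w \<Rightarrow> 'z \<Rightarrow> real) \<Rightarrow> 'w \<Rightarrow> (nat \<Rightarrow> 'z) \<Rightarrow> real" where
  "emp_risk n loss w s = (\<Sum>i<n. loss w (s i)) / real n"

definition gen :: "'z measure \<Rightarrow> nat \<Rightarrow> ('w \<Rightarrow> 'z \<Rightarrow> real) \<Rightarrow> 'w \<Rightarrow> (nat \<Rightarrow> 'z) \<Rightarrow> real" where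
  "gen PZ n loss w s = pop_risk PZ loss w - emp_risk n loss w s"

end

theory Submission
  imports Defs
begin


lemma integral_bind_kernel:
  fixes f :: "'b \<Rightarrow> real"
  assumes N: "N \<in> M \<rightarrow>\<^sub>M subprob_algebra B" and M: "space M \<noteq> {}"
    and f[measurable]: "f \<in> borel_measurable B" and int: "integrable (M \<bind> N) f"
  shows "AE x in M. integrable (N x) f"
    and "integrable M (\<lambda>x. \<integral> y. f y \<partial>N x)"
    and "(\<integral> y. f y \<partial>(M \<bind> N)) = (\<integral> x. \<integral> y. f y \<partial>N x \<partial>M)"
proof -
  note N' [measurable] = N
  have sets_N: "\<And>x. x \<in> space M \<Longrightarrow> sets (N x) = sets B"
    using sets_kernel[OF N] by blast
  have fN: "\<And>x. x \<in> space M \<Longrightarrow> f \<in> borel_measurable (N x)"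
    using sets_N measurable_cong_sets by (metis f)
  have nnb: "\<And>g. g \<in> borel_measurable B \<Longrightarrow> (\<integral>\<^sup>+y. g y \<partial>(M \<bind> N)) = (\<integral>\<^sup>+x. \<integral>\<^sup>+y. g y \<partial>N x \<partial>M)"
    by (rule nn_integral_bind[OF _ N])
  have mnn: "\<And>g. g \<in> borel_measurable B \<Longrightarrow> (\<lambda>x. \<integral>\<^sup>+y. g y \<partial>N x) \<in> borel_measurable M"
    by (rule measurable_compose[OF N nn_integral_measurable_subprob_algebra])
  have fin: "(\<integral>\<^sup>+y. norm (f y) \<partial>(M \<bind> N)) < \<infinity>"
    using int unfolding integrable_iff_bounded by simp
  then have fin2: "(\<integral>\<^sup>+x. \<integral>\<^sup>+y. norm (f y) \<partial>N x \<partial>M) < \<infinity>"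
    by (simp add: nnb)
  have AEfin: "AE x in M. (\<integral>\<^sup>+y. norm (f y) \<partial>N x) \<noteq> \<infinity>"
    by (rule nn_integral_PInf_AE) (use fin2 mnn in auto)
  show AEint: "AE x in M. integrable (N x) f"
    using AEfin by (auto intro!: AE_I2 simp: integrable_iff_bounded fN top.not_eq_extremum) 
  have mint: "(\<lambda>x. \<integral> y. f y \<partial>N x) \<in> borel_measurable M"
    by (rule measurable_compose[OF N integral_measurable_subprob_algebra[OF f]])
  show intM: "integrable M (\<lambda>x. \<integral> y. f y \<partial>N x)"
    unfolding integrable_iff_bounded
  proof (intro conjI mint)
    have "(\<integral>\<^sup>+x. norm (\<integral> y. f y \<partial>N x) \<partial>M) \<le> (\<integral>\<^sup>+x. \<integral>\<^sup>+y. norm (f y) \<partial>N x \<partial>M)"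
      using AEint by (intro nn_integral_mono_AE) (auto elim!: eventually_mono dest!: integral_norm_bound_ennreal)
    then show "(\<integral>\<^sup>+x. norm (\<integral> y. f y \<partial>N x) \<partial>M) < \<infinity>" using fin2 by (meson le_less_trans)
  qed
  define P where "P x = (\<integral>\<^sup>+y. ennreal (f y) \<partial>N x)" for x
  define Q where "Q x = (\<integral>\<^sup>+y. ennreal (- f y) \<partial>N x)" for x
  have Pm[measurable]: "P \<in> borel_measurable M" unfolding P_def by (rule mnn) simp
  have Qm[measurable]: "Q \<in> borel_measurable M" unfolding Q_def by (rule mnn) simp
  have Ple: "P x \<le> (\<integral>\<^sup>+y. norm (f y) \<partial>N x)" for x
    unfolding P_def by (intro nn_integral_mono) (auto intro: ennreal_leI)
  have Qle: "Q x \<le> (\<integral>\<^sup>+y. norm (f y) \<partial>N x)" for x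
    unfolding Q_def by (intro nn_integral_mono) (auto intro: ennreal_leI)
  have AEP: "AE x in M. P x \<noteq> \<infinity>" using AEfin
  proof eventually_elim
    case (elim x) then show ?case using Ple[of x] by (auto simp: top_unique)
  qed
  have AEQ: "AE x in M. Q x \<noteq> \<infinity>" using AEfin
  proof eventually_elim
    case (elim x) then show ?case using Qle[of x] by (auto simp: top_unique)
  qed
  have intP: "(\<integral>\<^sup>+x. P x \<partial>M) < \<infinity>"
    using fin2 Ple by (meson le_less_trans nn_integral_mono)
  have intQ: "(\<integral>\<^sup>+x. Q x \<partial>M) < \<infinity>"
    using fin2 Qle by (meson le_less_trans nn_integral_mono)
  have eqP: "(\<integral>\<^sup>+x. ennreal (enn2real (P x)) \<partial>M) = (\<integral>\<^sup>+x. P x \<partial>M)"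
    using AEP by (intro nn_integral_cong_AE) (auto elim!: eventually_mono simp: ennreal_enn2real_if)
  have eqQ: "(\<integral>\<^sup>+x. ennreal (enn2real (Q x)) \<partial>M) = (\<integral>\<^sup>+x. Q x \<partial>M)"
    using AEQ by (intro nn_integral_cong_AE) (auto elim!: eventually_mono simp: ennreal_enn2real_if)
  have iP: "integrable M (\<lambda>x. enn2real (P x))"
    by (intro integrableI_nonneg) (use eqP intP in auto)
  have iQ: "integrable M (\<lambda>x. enn2real (Q x))"
    by (intro integrableI_nonneg) (use eqQ intQ in auto)
  have "(\<integral> x. \<integral> y. f y \<partial>N x \<partial>M) = (\<integral> x. enn2real (P x) - enn2real (Q x) \<partial>M)"
    using AEint by (intro integral_cong_AE) (auto elim!: eventually_mono simp: P_def Q_def real_lebesgue_integral_def mint)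
  also have "\<dots> = (\<integral> x. enn2real (P x) \<partial>M) - (\<integral> x. enn2real (Q x) \<partial>M)"
    using iP iQ by simp
  also have "\<dots> = enn2real (\<integral>\<^sup>+x. P x \<partial>M) - enn2real (\<integral>\<^sup>+x. Q x \<partial>M)"
    by (simp add: integral_eq_nn_integral eqP eqQ)
  also have "\<dots> = (\<integral> y. f y \<partial>(M \<bind> N))"
    by (simp add: real_lebesgue_integral_def[OF int] nnb P_def Q_def)
  finally show "(\<integral> y. f y \<partial>(M \<bind> N)) = (\<integral> x. \<integral> y. f y \<partial>N x \<partial>M)" ..
qed


lemma coupling_bound:
  fixes P Q :: "'w::polish_space measure" and f :: "'w \<Rightarrow> real"
  assumes Ps: "sets P = sets borel" and Qs: "sets Q = sets borel"
   and f[measurable]: "f \<in> borel_measurable borel" and lip: "\<And>w w'. \<bar>f w - f w'\<bar> \<le> L * dist w w'"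
   and intQ: "integrable Q f" and L: "L > 0"
  shows "ennreal (\<bar>(\<integral>w. f w \<partial>P) - (\<integral>w. f w \<partial>Q)\<bar> / L) \<le> wasserstein1 P Q"
  unfolding wasserstein1_def
proof (rule INF_greatest)
  fix R assume "R \<in> couplings P Q"
  then have Rs: "sets R = sets (borel \<Otimes>\<^sub>M borel)" and RP: "distr R borel fst = P"
    and RQ: "distr R borel snd = Q" unfolding couplings_def by auto
  have mfst[measurable]: "fst \<in> R \<rightarrow>\<^sub>M borel" by (subst measurable_cong_sets[OF Rs refl]) simp
  have msnd[measurable]: "snd \<in> R \<rightarrow>\<^sub>M borel" by (subst measurable_cong_sets[OF Rs refl]) simp
  have dm[measurable]: "(\<lambda>xy. dist (fst xy) (snd xy)) \<in> borel_measurable R" by measurable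
  show "ennreal (\<bar>(\<integral>w. f w \<partial>P) - (\<integral>w. f w \<partial>Q)\<bar> / L) \<le> (\<integral>\<^sup>+ xy. ennreal (dist (fst xy) (snd xy)) \<partial>R)"
  proof (cases "(\<integral>\<^sup>+ xy. ennreal (dist (fst xy) (snd xy)) \<partial>R) = \<infinity>")
    case True then show ?thesis by simp
  next
    case False
    have idist: "integrable R (\<lambda>xy. dist (fst xy) (snd xy))"
      by (intro integrableI_nonneg) (use False in \<open>auto simp: top.not_eq_extremum\<close>)
    have isnd: "integrable R (\<lambda>xy. f (snd xy))"
      using intQ integrable_distr_eq[OF msnd f] RQ by simp
    have idiff: "integrable R (\<lambda>xy. f (fst xy) - f (snd xy))"
    proof (rule Bochner_Integration.integrable_bound)
      show "integrable R (\<lambda>xy. L * dist (fst xy) (snd xy))" using idist by simp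
      show "AE x in R. norm (f (fst x) - f (snd x)) \<le> norm (L * dist (fst x) (snd x))"
        using lip L by (auto intro!: AE_I2 simp: abs_mult)
    qed measurable
    have ifst: "integrable R (\<lambda>xy. f (fst xy))"
      using Bochner_Integration.integrable_add[OF idiff isnd] by simp
    have eP: "(\<integral>w. f w \<partial>P) = (\<integral>xy. f (fst xy) \<partial>R)"
      using integral_distr[OF mfst f] RP by simp
    have eQ: "(\<integral>w. f w \<partial>Q) = (\<integral>xy. f (snd xy) \<partial>R)"
      using integral_distr[OF msnd f] RQ by simp
    have "\<bar>(\<integral>w. f w \<partial>P) - (\<integral>w. f w \<partial>Q)\<bar> = \<bar>\<integral>xy. f (fst xy) - f (snd xy) \<partial>R\<bar>"
      using ifst isnd by (simp add: eP eQ)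
    also have "\<dots> \<le> (\<integral>xy. \<bar>f (fst xy) - f (snd xy)\<bar> \<partial>R)"
      by (rule integral_abs_bound)
    also have "\<dots> \<le> (\<integral>xy. L * dist (fst xy) (snd xy) \<partial>R)"
      using idiff idist lip by (intro integral_mono) auto
    also have "\<dots> = L * (\<integral>xy. dist (fst xy) (snd xy) \<partial>R)" by simp
    finally have "\<bar>(\<integral>w. f w \<partial>P) - (\<integral>w. f w \<partial>Q)\<bar> / L \<le> (\<integral>xy. dist (fst xy) (snd xy) \<partial>R)"
      using L by (simp add: divide_le_eq mult.commute)
    then have "ennreal (\<bar>(\<integral>w. f w \<partial>P) - (\<integral>w. f w \<partial>Q)\<bar> / L) \<le> ennreal (\<integral>xy. dist (fst xy) (snd xy) \<partial>R)"
      by (rule ennreal_leI)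
    also have "\<dots> = (\<integral>\<^sup>+ xy. ennreal (dist (fst xy) (snd xy)) \<partial>R)"
      using idist by (intro nn_integral_eq_integral[symmetric]) auto
    finally show ?thesis .
  qed
qed

lemma const_case:
  fixes P Q :: "'w::metric_space measure" and f :: "'w \<Rightarrow> real"
  assumes "prob_space P" "prob_space Q" and lip: "\<And>w w'. \<bar>f w - f w'\<bar> \<le> L * dist w w'" and L: "L \<le> 0"
  shows "(\<integral>w. f w \<partial>P) = (\<integral>w. f w \<partial>Q)"
proof -
  have c: "f w = f undefined" for w
    using lip[of w undefined] L by (smt (verit) mult_nonpos_nonneg zero_le_dist)
  have "(\<integral>w. f w \<partial>P) = f undefined" "(\<integral>w. f w \<partial>Q) = f undefined"
    using assms(1,2) by (subst c, simp add: prob_space.prob_space)+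
  then show ?thesis by simp
qed


theorem theorem1:
  fixes PZ :: "'z measure"
    and n :: nat
    and K :: "(nat \<Rightarrow> 'z) \<Rightarrow> 'w::polish_space measure"
    and Q :: "nat \<Rightarrow> 'z \<Rightarrow> 'w measure"
    and loss :: "'w \<Rightarrow> 'z \<Rightarrow> real"
    and L :: real
  defines "S \<equiv> PiM {..<n} (\<lambda>_. PZ)"
  defines "J \<equiv> joint S K borel"
  defines "PW \<equiv> S \<bind> K"
  assumes PZ: "prob_space PZ"
    and n: "n > 0"
    and K: "K \<in> S \<rightarrow>\<^sub>M prob_algebra borel"
    and Q_kernel: "\<And>i. i < n \<Longrightarrow> Q i \<in> PZ \<rightarrow>\<^sub>M prob_algebra borel"
    and Q_cond: "\<And>i A B. i < n \<Longrightarrow> A \<in> sets PZ \<Longrightarrow> B \<in> sets borel \<Longrightarrow>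
        (\<integral>\<^sup>+ z. indicator A z * emeasure (Q i z) B \<partial>PZ)
          = emeasure J ({p. fst p i \<in> A \<and> snd p \<in> B} \<inter> space J)"
    and loss_meas: "(\<lambda>p. loss (fst p) (snd p)) \<in> borel_measurable (borel \<Otimes>\<^sub>M PZ)"
    and loss_int_joint: "\<And>i. i < n \<Longrightarrow> integrable J (\<lambda>p. loss (snd p) (fst p i))"
    and loss_int_indep: "integrable (PW \<Otimes>\<^sub>M PZ) (\<lambda>p. loss (fst p) (snd p))"
    and lipschitz: "\<And>z w w'. z \<in> space PZ \<Longrightarrow> \<bar>loss w z - loss w' z\<bar> \<le> L * dist w w'"
  shows "ennreal \<bar>\<integral> p. gen PZ n loss (snd p) (fst p) \<partial>J\<bar>
           \<le> ennreal (L / real n) * (\<Sum>i<n. \<integral>\<^sup>+ z. wasserstein1 (Q i z) PW \<partial>PZ)"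
proof -
  interpret PZ: prob_space PZ by (rule PZ)
  have PS: "prob_space S" unfolding S_def by (intro prob_space_PiM PZ)
  interpret S: prob_space S by (rule PS)
  have K'[measurable]: "K \<in> S \<rightarrow>\<^sub>M subprob_algebra borel" by (rule measurable_prob_algebraD[OF K])
  have Ks: "\<And>s. s \<in> space S \<Longrightarrow> sets (K s) = sets borel" using sets_kernel[OF K'] by blast
  have Kp: "\<And>s. s \<in> space S \<Longrightarrow> prob_space (K s)"
    using measurable_space[OF K] by (simp add: space_prob_algebra)
  have spS: "space S \<noteq> {}" by (rule S.not_empty)
  define KJ where "KJ s = distr (K s) (S \<Otimes>\<^sub>M borel) (\<lambda>w. (s, w))" for s
  have KJm: "KJ \<in> S \<rightarrow>\<^sub>M subprob_algebra (S \<Otimes>\<^sub>M borel)"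
    unfolding KJ_def by (rule measurable_distr2[OF _ K']) simp
  have J_eq: "J = S \<bind> KJ" unfolding J_def joint_def KJ_def ..
  have sets_J: "sets J = sets (S \<Otimes>\<^sub>M borel)" unfolding J_eq by (rule sets_bind_measurable[OF KJm spS])
  have space_J: "space J = space S \<times> UNIV" using sets_eq_imp_space_eq[OF sets_J] by (simp add: space_pair_measure)
  have sets_PW: "sets PW = sets borel" unfolding PW_def by (rule sets_bind_measurable[OF K' spS])
  have PWp: "prob_space PW" unfolding PW_def
    by (rule prob_space_bind'[OF _ K]) (simp add: space_prob_algebra PS)
  interpret PW: prob_space PW by (rule PWp)
  have distr_J: "distr J borel snd = PW"
  proof -
    have "distr J borel snd = S \<bind> (\<lambda>s. distr (KJ s) borel snd)"
      unfolding J_eq by (rule distr_bind[OF KJm spS]) simp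
    also have "\<dots> = S \<bind> K"
    proof (rule bind_cong[OF refl])
      fix s assume s: "s \<in> space S"
      have "distr (KJ s) borel snd = distr (K s) borel (snd \<circ> (\<lambda>w. (s, w)))"
        unfolding KJ_def
        by (rule distr_distr) (auto simp: measurable_cong_sets[OF Ks[OF s] refl] intro!: measurable_Pair1' s)
      also have "\<dots> = distr (K s) borel (\<lambda>x. x)" by (simp add: comp_def)
      also have "\<dots> = K s" by (rule distr_id2) (simp add: Ks[OF s])
      finally show "distr (KJ s) borel snd = K s" .
    qed
    finally show ?thesis unfolding PW_def .
  qed
  have snd_J[measurable]: "snd \<in> J \<rightarrow>\<^sub>M borel"
    by (subst measurable_cong_sets[OF sets_J refl]) simp
  have lossm: "(\<lambda>q. loss (snd q) (fst q)) \<in> borel_measurable (PZ \<Otimes>\<^sub>M borel)"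
    using measurable_compose[OF measurable_pair_swap' loss_meas] by (simp add: case_prod_beta')
  have per_i: "(\<integral>p. loss (snd p) (fst p i) \<partial>J) = (\<integral>z. \<integral>w. loss w z \<partial>Q i z \<partial>PZ)
      \<and> integrable PZ (\<lambda>z. \<integral>w. loss w z \<partial>Q i z)" if i: "i < n" for i
  proof -
    have Qm[measurable]: "Q i \<in> PZ \<rightarrow>\<^sub>M subprob_algebra borel" by (rule measurable_prob_algebraD[OF Q_kernel[OF i]])
    have Qs: "\<And>z. z \<in> space PZ \<Longrightarrow> sets (Q i z) = sets borel" using sets_kernel[OF Qm] by blast
    have Qp: "\<And>z. z \<in> space PZ \<Longrightarrow> prob_space (Q i z)"
      using measurable_space[OF Q_kernel[OF i]] by (simp add: space_prob_algebra)
    define KQ where "KQ z = distr (Q i z) (PZ \<Otimes>\<^sub>M borel) (\<lambda>w. (z, w))" for z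
    have KQm: "KQ \<in> PZ \<rightarrow>\<^sub>M subprob_algebra (PZ \<Otimes>\<^sub>M borel)"
      unfolding KQ_def by (rule measurable_distr2[OF _ Qm]) simp
    have Pairm: "(\<lambda>w. (z, w)) \<in> Q i z \<rightarrow>\<^sub>M PZ \<Otimes>\<^sub>M borel" if z: "z \<in> space PZ" for z
      by (auto simp: measurable_cong_sets[OF Qs[OF z] refl] intro!: measurable_Pair1' z)
    define Mi where "Mi = PZ \<bind> KQ"
    define proj where "proj p = (fst p i, snd p)" for p :: "(nat \<Rightarrow> 'z) \<times> 'w"
    have projm[measurable]: "proj \<in> J \<rightarrow>\<^sub>M PZ \<Otimes>\<^sub>M borel"
      unfolding proj_def using i
      by (subst measurable_cong_sets[OF sets_J refl]) (auto simp: S_def)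
    define Ni where "Ni = distr J (PZ \<Otimes>\<^sub>M borel) proj"
    have rect: "emeasure Mi (A \<times> B) = (\<integral>\<^sup>+ z. indicator A z * emeasure (Q i z) B \<partial>PZ)"
      if A: "A \<in> sets PZ" and B: "B \<in> sets borel" for A B
    proof -
      have "emeasure Mi (A \<times> B) = (\<integral>\<^sup>+ z. emeasure (KQ z) (A \<times> B) \<partial>PZ)"
        unfolding Mi_def by (rule emeasure_bind[OF PZ.not_empty KQm]) (use A B in auto)
      also have "\<dots> = (\<integral>\<^sup>+ z. indicator A z * emeasure (Q i z) B \<partial>PZ)"
      proof (rule nn_integral_cong)
        fix z assume z: "z \<in> space PZ"
        have "emeasure (KQ z) (A \<times> B) = emeasure (Q i z) ((\<lambda>w. (z, w)) -` (A \<times> B) \<inter> space (Q i z))"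
          unfolding KQ_def by (rule emeasure_distr[OF Pairm[OF z]]) (use A B in auto)
        also have "\<dots> = indicator A z * emeasure (Q i z) B"
          using sets_eq_imp_space_eq[OF Qs[OF z]] by (auto simp: indicator_def)
        finally show "emeasure (KQ z) (A \<times> B) = indicator A z * emeasure (Q i z) B" .
      qed
      finally show ?thesis .
    qed
    have MN: "Mi = Ni"
    proof (rule measure_eqI_generator_eq[OF Int_stable_pair_measure_generator[of PZ "borel::'w measure"] pair_measure_closed])
      fix X assume "X \<in> {a \<times> b |a b. a \<in> sets PZ \<and> b \<in> sets (borel::'w measure)}"
      then obtain A B where X: "X = A \<times> B" and A: "A \<in> sets PZ" and B: "B \<in> sets borel" by auto
      have "emeasure Ni X = emeasure J (proj -` X \<inter> space J)"
        unfolding Ni_def by (rule emeasure_distr[OF projm]) (use X A B in auto)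
      also have "proj -` X \<inter> space J = {p. fst p i \<in> A \<and> snd p \<in> B} \<inter> space J"
        by (auto simp: X proj_def)
      finally show "emeasure Mi X = emeasure Ni X"
        using rect[OF A B] Q_cond[OF i A B] X by simp
    next
      show "sets Mi = sigma_sets (space PZ \<times> space (borel::'w measure)) {a \<times> b |a b. a \<in> sets PZ \<and> b \<in> sets (borel::'w measure)}"
        unfolding Mi_def by (simp add: sets_bind_measurable[OF KQm PZ.not_empty] sets_pair_measure)
      show "sets Ni = sigma_sets (space PZ \<times> space (borel::'w measure)) {a \<times> b |a b. a \<in> sets PZ \<and> b \<in> sets (borel::'w measure)}"
        unfolding Ni_def by (simp add: sets_pair_measure)
      show "range (\<lambda>_. space PZ \<times> space (borel::'w measure)) \<subseteq> {a \<times> b |a b. a \<in> sets PZ \<and> b \<in> sets (borel::'w measure)}" by blast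
      show "(\<Union>j::nat. space PZ \<times> space (borel::'w measure)) = space PZ \<times> space (borel::'w measure)" by simp
      have "emeasure Mi (space PZ \<times> space (borel::'w measure)) = (\<integral>\<^sup>+ z. indicator (space PZ) z * emeasure (Q i z) UNIV \<partial>PZ)"
        using rect[of "space PZ" UNIV] by simp
      also have "\<dots> = (\<integral>\<^sup>+ z. 1 \<partial>PZ)"
      proof (rule nn_integral_cong)
        fix z assume z: "z \<in> space PZ"
        have "emeasure (Q i z) UNIV = 1"
          using prob_space.emeasure_space_1[OF Qp[OF z]] sets_eq_imp_space_eq[OF Qs[OF z]] by simp
        then show "indicator (space PZ) z * emeasure (Q i z) UNIV = 1" using z by simp
      qed
      finally have "emeasure Mi (space PZ \<times> space (borel::'w measure)) = (\<integral>\<^sup>+ z. 1 \<partial>PZ)" .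
      then show "\<And>j::nat. emeasure Mi (space PZ \<times> space (borel::'w measure)) \<noteq> \<infinity>" by simp
    qed
    have intN: "integrable Ni (\<lambda>q. loss (snd q) (fst q))"
      unfolding Ni_def using loss_int_joint[OF i]
      by (subst integrable_distr_eq[OF projm lossm]) (simp add: proj_def)
    have eqN: "(\<integral>p. loss (snd p) (fst p i) \<partial>J) = (\<integral>q. loss (snd q) (fst q) \<partial>Ni)"
      unfolding Ni_def by (subst integral_distr[OF projm lossm]) (simp add: proj_def)
    have intM: "integrable (PZ \<bind> KQ) (\<lambda>q. loss (snd q) (fst q))" using intN MN Mi_def by simp
    have inner: "(\<integral>q. loss (snd q) (fst q) \<partial>KQ z) = (\<integral>w. loss w z \<partial>Q i z)" if z: "z \<in> space PZ" for z
      unfolding KQ_def by (subst integral_distr[OF Pairm[OF z] lossm]) simp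
    note B = integral_bind_kernel[OF KQm PZ.not_empty lossm intM]
    show ?thesis
    proof
      show "(\<integral>p. loss (snd p) (fst p i) \<partial>J) = (\<integral>z. \<integral>w. loss w z \<partial>Q i z \<partial>PZ)"
        using eqN B(3) MN Mi_def Bochner_Integration.integral_cong[OF refl inner] by simp
      show "integrable PZ (\<lambda>z. \<integral>w. loss w z \<partial>Q i z)"
        using B(2) Bochner_Integration.integrable_cong[OF refl inner, of PZ "\<lambda>z. z"] by simp
    qed
  qed
  interpret PWZ: pair_sigma_finite PW PZ ..
  have li: "integrable (PW \<Otimes>\<^sub>M PZ) (case_prod loss)"
    using loss_int_indep by (simp add: case_prod_beta')
  note AEPW = PWZ.AE_integrable_snd[OF li]
  note intPWz = PWZ.integrable_snd[OF li]
  note eq1 = PWZ.integral_snd[OF li]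
  note intpop = PWZ.integrable_fst[OF li]
  note eq2 = PWZ.integral_fst[OF li]
  have pop_eq: "pop_risk PZ loss = (\<lambda>w. \<integral>z. loss w z \<partial>PZ)"
    by (simp add: pop_risk_def fun_eq_iff)
  have popm: "pop_risk PZ loss \<in> borel_measurable borel"
    using borel_measurable_integrable[OF intpop] unfolding pop_eq
    by (subst (asm) measurable_cong_sets[OF sets_PW refl])
  have intpopJ: "integrable J (\<lambda>p. pop_risk PZ loss (snd p))"
    using integrable_distr_eq[OF snd_J popm] distr_J intpop pop_eq by simp
  define b where "b = (\<integral>z. \<integral>w. loss w z \<partial>PW \<partial>PZ)"
  define a where "a i = (\<integral>z. \<integral>w. loss w z \<partial>Q i z \<partial>PZ)" for i
  have bJ: "(\<integral>p. pop_risk PZ loss (snd p) \<partial>J) = b"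
  proof -
    have "(\<integral>p. pop_risk PZ loss (snd p) \<partial>J) = (\<integral>w. pop_risk PZ loss w \<partial>PW)"
      using integral_distr[OF snd_J popm] distr_J by simp
    then show ?thesis using eq1 eq2 pop_eq b_def by simp
  qed
  have intsum: "integrable J (\<lambda>p. (\<Sum>i<n. loss (snd p) (fst p i)) / real n)"
    using loss_int_joint by (intro integrable_divide_zero integrable_sum) auto
  have gen_eq: "(\<integral>p. gen PZ n loss (snd p) (fst p) \<partial>J) = (\<Sum>i<n. b - a i) / real n"
  proof -
    have "(\<integral>p. gen PZ n loss (snd p) (fst p) \<partial>J)
        = (\<integral>p. pop_risk PZ loss (snd p) - (\<Sum>i<n. loss (snd p) (fst p i)) / real n \<partial>J)"
      by (simp add: gen_def emp_risk_def)
    also have "\<dots> = b - (\<Sum>i<n. a i) / real n"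
      using intpopJ intsum loss_int_joint per_i
      by (simp add: bJ integral_sum a_def)
    also have "\<dots> = (\<Sum>i<n. b - a i) / real n"
      using n by (simp add: sum_subtractf field_simps)
    finally show ?thesis .
  qed
  define D where "D i z = (\<integral>w. loss w z \<partial>PW) - (\<integral>w. loss w z \<partial>Q i z)" for i z
  have intD: "integrable PZ (D i)" if i: "i < n" for i
    unfolding D_def using intPWz per_i[OF i] by simp
  have baD: "b - a i = (\<integral>z. D i z \<partial>PZ)" if i: "i < n" for i
    unfolding D_def b_def a_def using intPWz per_i[OF i] by simp
  have lossm_w: "(\<lambda>w. loss w z) \<in> borel_measurable borel" if z: "z \<in> space PZ" for z
    using measurable_compose[OF measurable_Pair2'[OF z] loss_meas] by simp
  have Qsp: "sets (Q i z) = sets borel \<and> prob_space (Q i z)" if i: "i < n" and z: "z \<in> space PZ" for i z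
    using measurable_space[OF Q_kernel[OF i] z] by (simp add: space_prob_algebra)
  show ?thesis
  proof (cases "L \<le> 0")
    case True
    have "b - a i = 0" if i: "i < n" for i
    proof -
      have "(\<integral>z. D i z \<partial>PZ) = (\<integral>z. 0 \<partial>PZ)"
      proof (rule Bochner_Integration.integral_cong[OF refl])
        fix z assume z: "z \<in> space PZ"
        show "D i z = 0" unfolding D_def
          using const_case[OF PWp conjunct2[OF Qsp[OF i z]] lipschitz[OF z] True] by simp
      qed
      then show ?thesis using baD[OF i] by simp
    qed
    then have "(\<integral>p. gen PZ n loss (snd p) (fst p) \<partial>J) = 0" by (simp add: gen_eq)
    then show ?thesis by simp
  next
    case False
    then have L: "L > 0" by simp
    define X where "X i = (\<integral>\<^sup>+ z. wasserstein1 (Q i z) PW \<partial>PZ)" for i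
    have claim: "ennreal \<bar>b - a i\<bar> \<le> ennreal L * X i" if i: "i < n" for i
    proof -
      have AEb: "AE z in PZ. ennreal (\<bar>D i z\<bar> / L) \<le> wasserstein1 (Q i z) PW"
        using AEPW AE_space[of PZ]
      proof eventually_elim
        case (elim z)
        have "ennreal (\<bar>(\<integral>w. loss w z \<partial>Q i z) - (\<integral>w. loss w z \<partial>PW)\<bar> / L) \<le> wasserstein1 (Q i z) PW"
          by (rule coupling_bound[OF conjunct1[OF Qsp[OF i elim(2)]] sets_PW lossm_w[OF elim(2)]
                lipschitz[OF elim(2)] elim(1) L])
        then show ?case unfolding D_def by (simp add: abs_minus_commute)
      qed
      have "\<bar>b - a i\<bar> / L \<le> (\<integral>z. \<bar>D i z\<bar> / L \<partial>PZ)"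
        using baD[OF i] integral_abs_bound[of PZ "D i"] L by (simp add: divide_right_mono)
      then have "ennreal (\<bar>b - a i\<bar> / L) \<le> ennreal (\<integral>z. \<bar>D i z\<bar> / L \<partial>PZ)"
        by (rule ennreal_leI)
      also have "\<dots> = (\<integral>\<^sup>+z. ennreal (\<bar>D i z\<bar> / L) \<partial>PZ)"
        using intD[OF i] L by (intro nn_integral_eq_integral[symmetric]) auto
      also have "\<dots> \<le> X i" unfolding X_def using AEb by (rule nn_integral_mono_AE)
      finally have "ennreal (\<bar>b - a i\<bar> / L) \<le> X i" .
      then have "ennreal L * ennreal (\<bar>b - a i\<bar> / L) \<le> ennreal L * X i"
        by (rule mult_left_mono) simp
      moreover have "ennreal L * ennreal (\<bar>b - a i\<bar> / L) = ennreal \<bar>b - a i\<bar>"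
        using L by (simp add: ennreal_mult[symmetric])
      ultimately show ?thesis by simp
    qed
    have "ennreal \<bar>\<integral>p. gen PZ n loss (snd p) (fst p) \<partial>J\<bar> \<le> ennreal ((\<Sum>i<n. \<bar>b - a i\<bar>) / real n)"
      unfolding gen_eq using n
      by (intro ennreal_leI) (simp add: divide_right_mono sum_abs)
    also have "\<dots> = ennreal (1 / real n) * (\<Sum>i<n. ennreal \<bar>b - a i\<bar>)"
      by (simp add: ennreal_mult[symmetric])
    also have "\<dots> \<le> ennreal (1 / real n) * (\<Sum>i<n. ennreal L * X i)"
      using claim by (intro mult_left_mono sum_mono) auto
    also have "\<dots> = ennreal (L / real n) * (\<Sum>i<n. X i)"
    proof -
      have e: "ennreal (L / real n) = ennreal (1 / real n) * ennreal L"
        using L by (subst ennreal_mult[symmetric]) auto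
      show ?thesis by (simp add: e sum_distrib_left[symmetric] mult.assoc)
    qed
    finally show ?thesis unfolding X_def .
  qed
qed
end
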